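(* Let $\sigma\in S_n$, let $X$ be a metric space, let $A,B\subseteq X$ be disjoint nonempty closed subsets, and let $\lambda_1,\dots,\lambda_n:X\to\mathbb{C}$ be continuous. Then there exists a continuous map $v:X\to\mathcal{U}(\mathrm{M}_n)$ (a unitary in $\mathrm{M}_n(\mathrm{C}(X))$) such that (i) $v(x)=1_n$ for all $x\in A$; (ii) $v(x)=U[\sigma]$ for all $x\in B$; and (iii) $v(x)$ commutes with $\mathrm{diag}(\lambda_1(x),\dots,\lambda_n(x))$ whenever $\lambda_i(x)=\lambda_{\sigma(i)}(x)$ for every $i\in\{1,\dots,n\}$.
   Context: $\mathcal{U}(\mathrm{M}_n)$ is the unitary group of $\mathrm{M}_n$. For $\pi\in S_n$, $U[\pi]$ denotes the permutation matrix obtained from the identity matrix of $\mathrm{M}_n$ by moving the $i$-th row to the $\pi(i)$-th row, for each $i$. *)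

theory Defs
  imports "HOL-Analysis.Analysis" "HOL-Combinatorics.Permutations"
begin

definition ctrans :: "complex ^ 'n ^ 'n \<Rightarrow> complex ^ 'n ^ 'n" where
  "ctrans U = (\<chi> i j. cnj (U $ j $ i))"

text \<open>Unitary matrices in M_n (indices of finite type 'n, n = CARD('n)).\<close>
definition unitary_mat :: "complex ^ 'n ^ 'n \<Rightarrow> bool" where
  "unitary_mat U \<longleftrightarrow> U ** ctrans U = mat 1 \<and> ctrans U ** U = mat 1"

text \<open>U[pi]: the identity with its i-th row moved to the pi(i)-th row,
  i.e. row pi(i) of U[pi] is e_i.\<close>
definition perm_mat :: "('n \<Rightarrow> 'n) \<Rightarrow> complex ^ 'n ^ 'n" where
  "perm_mat p = (\<chi> r c. if r = p c then 1 else 0)"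

definition diag_mat :: "('n \<Rightarrow> complex) \<Rightarrow> complex ^ 'n ^ 'n" where
  "diag_mat d = (\<chi> i j. if i = j then d i else 0)"

end

theory Submission
  imports Defs "HOL-Combinatorics.Cycles"
begin

definition smult :: "complex \<Rightarrow> complex^'n^'n \<Rightarrow> complex^'n^'n" where
  "smult c M = (\<chi> i j. c * M$i$j)"

lemma smult_mult_left: "smult c M ** N = smult c (M ** N)"
  by (simp add: smult_def matrix_matrix_mult_def vec_eq_iff sum_distrib_left mult.assoc)
lemma smult_mult_right: "M ** smult c N = smult c (M ** N)"
  by (simp add: smult_def matrix_matrix_mult_def vec_eq_iff sum_distrib_left mult.left_commute)
lemma smult_smult: "smult a (smult b M) = smult (a*b) M"
  by (simp add: smult_def vec_eq_iff mult.assoc)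
lemma smult_sum: "smult c (sum f S) = sum (\<lambda>k. smult c (f k)) S"
  by (simp add: smult_def vec_eq_iff sum_distrib_left)
lemma sum_smult: "sum (\<lambda>k. smult (g k) M) S = smult (sum g S) M"
  by (simp add: smult_def vec_eq_iff sum_distrib_right)
lemma smult_one[simp]: "smult 1 M = M"
  by (simp add: smult_def vec_eq_iff)
lemma sum_mult_left: "sum f S ** N = sum (\<lambda>k. f k ** N) S"
  by (simp add: matrix_matrix_mult_def vec_eq_iff sum_distrib_right sum.swap[of _ S])
lemma sum_mult_right: "N ** sum f S = sum (\<lambda>k. N ** f k) S"
  by (simp add: matrix_matrix_mult_def vec_eq_iff sum_distrib_left sum.swap[of _ S])
lemma ctrans_mult: "ctrans (M ** N) = ctrans N ** ctrans M"
  by (simp add: ctrans_def matrix_matrix_mult_def vec_eq_iff mult.commute)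
lemma ctrans_sum: "ctrans (sum f S) = sum (\<lambda>k. ctrans (f k)) S"
  by (simp add: ctrans_def vec_eq_iff)
lemma ctrans_smult: "ctrans (smult c M) = smult (cnj c) (ctrans M)"
  by (simp add: ctrans_def smult_def vec_eq_iff)
lemma ctrans_one[simp]: "ctrans (mat 1) = mat 1"
  by (simp add: ctrans_def mat_def vec_eq_iff)
lemma smult_fix: "smult c X = X \<Longrightarrow> c \<noteq> 1 \<Longrightarrow> X = 0"
  by (auto simp: smult_def vec_eq_iff)

lemma perm_mat_mult: "perm_mat p ** perm_mat q = perm_mat (p \<circ> q)"
proof -
  have "(\<Sum>k\<in>UNIV. (if i = p k then 1 else 0) * (if k = a then 1 else 0)) = (if i = p a then 1 else (0::complex))" for i a
  proof -
    have e: "(\<lambda>k. (if i = p k then 1 else 0) * (if k = a then 1 else (0::complex))) = (\<lambda>k. if k = a then (if i = p a then 1 else 0) else 0)" by auto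
    show ?thesis unfolding e by (simp only: sum.delta finite UNIV_I if_True)
  qed
  then show ?thesis by (simp add: perm_mat_def matrix_matrix_mult_def vec_eq_iff)
qed
lemma perm_mat_id: "perm_mat id = mat 1"
  by (simp add: perm_mat_def mat_def vec_eq_iff)

lemma perm_mat_unitary: assumes "p permutes UNIV" shows "perm_mat p ** ctrans (perm_mat p) = mat 1"
  "ctrans (perm_mat p) ** perm_mat p = mat 1"
proof -
  have c: "ctrans (perm_mat p) = perm_mat (inv p)"
    using permutes_inverses(1)[OF assms] permutes_inverses(2)[OF assms]
    by (auto simp: ctrans_def perm_mat_def vec_eq_iff)
  show "perm_mat p ** ctrans (perm_mat p) = mat 1" "ctrans (perm_mat p) ** perm_mat p = mat 1"
    unfolding c perm_mat_mult using permutes_inv_o[OF assms] by (simp_all add: perm_mat_id)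
qed

lemma diag_mult: "diag_mat d ** M = (\<chi> r c. d r * M$r$c)"
  by (simp add: diag_mat_def matrix_matrix_mult_def vec_eq_iff if_distrib[of "\<lambda>x. x * _"] cong: if_cong)
lemma mult_diag: "M ** diag_mat d = (\<chi> r c. M$r$c * d c)"
  by (simp add: diag_mat_def matrix_matrix_mult_def vec_eq_iff if_distrib[of "\<lambda>x. _ * x"] cong: if_cong)
lemma diag_perm_comm: assumes "\<And>c. d (q c) = d c"
  shows "diag_mat d ** perm_mat q = perm_mat q ** diag_mat d"
  using assms by (auto simp: diag_mult mult_diag perm_mat_def vec_eq_iff)

lemma sum_single: "finite S \<Longrightarrow> k \<in> S \<Longrightarrow> (\<And>l. l \<in> S \<Longrightarrow> l \<noteq> k \<Longrightarrow> f l = 0) \<Longrightarrow> sum f S = f k"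
proof -
  assume a: "finite S" "k \<in> S" "\<And>l. l \<in> S \<Longrightarrow> l \<noteq> k \<Longrightarrow> f l = 0"
  have "sum f S = sum f {k}" by (rule sum.mono_neutral_right) (use a in auto)
  then show ?thesis by simp
qed

lemma sum_shift:
  fixes g :: "nat \<Rightarrow> 'b::ab_group_add"
  assumes "g m = g 0" shows "(\<Sum>j<m. g (Suc j)) = (\<Sum>j<m. g j)"
proof -
  have "g 0 + (\<Sum>j<m. g (Suc j)) = (\<Sum>j<m. g j) + g m"
    using sum.lessThan_Suc_shift[of g m] sum.lessThan_Suc[of g m] by simp
  then show ?thesis using assms by (simp add: add.commute)
qed

lemma smult_zero[simp]: "smult 0 M = 0" by (simp add: smult_def vec_eq_iff)
lemma smult_zero2[simp]: "smult c 0 = 0" by (simp add: smult_def vec_eq_iff)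

lemma continuous_smult: "continuous_on S g \<Longrightarrow> continuous_on S (\<lambda>x. smult (g x) M)"
  unfolding smult_def by (intro continuous_on_vec_lambda continuous_intros)

definition om :: "nat \<Rightarrow> complex" where "om m = exp (2 * of_real pi * \<i> / of_nat m)"
definition ze :: "nat \<Rightarrow> complex" where "ze m = exp (- (2 * of_real pi * \<i> / of_nat m))"

lemma root_dvd: assumes "m > 0" "exp (of_int d * (2 * of_real pi * \<i> / of_nat m)) = 1"
  shows "int m dvd d"
proof -
  from assms(2) obtain n :: int where n: "Im (of_int d * (2 * of_real pi * \<i> / of_nat m)) = of_int (2*n) * pi"
    unfolding exp_eq_1 by blast
  have "of_int d * (2 * pi) / real m = of_int (2*n) * pi" using n by simp
  then have "real_of_int d = of_int n * real m" using assms(1) pi_gt_zero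
    by (simp add: field_simps)
  then have "d = n * int m" by (metis of_int_eq_iff of_int_mult of_int_of_nat_eq)
  then show ?thesis by simp
qed

lemma om_pow: "om m ^ k = exp (of_int (int k) * (2 * of_real pi * \<i> / of_nat m))"
  unfolding om_def by (simp add: exp_of_nat_mult[symmetric])
lemma ze_pow: "ze m ^ k = exp (of_int (- int k) * (2 * of_real pi * \<i> / of_nat m))"
  unfolding ze_def by (simp add: exp_of_nat_mult[symmetric])
lemma om_ze: "om m * ze m = 1"
  unfolding om_def ze_def by (simp add: exp_add[symmetric])
lemma cnj_om: "cnj (om m) = ze m"
  unfolding om_def ze_def by (simp add: exp_cnj)
lemma om_m: "m > 0 \<Longrightarrow> om m ^ m = 1"
  unfolding om_pow by (simp add: exp_eq_1)
lemma ze_m: "m > 0 \<Longrightarrow> ze m ^ m = 1"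
  using om_m[of m] om_ze[of m] by (metis mult_1 power_mult_distrib power_one)
lemma om_ze_ne: assumes "m > 0" "k < m" "l < m" "k \<noteq> l" shows "om m ^ k * ze m ^ l \<noteq> 1"
proof
  assume "om m ^ k * ze m ^ l = 1"
  then have "exp (of_int (int k - int l) * (2 * of_real pi * \<i> / of_nat m)) = 1"
  proof -
    have "of_int (int k - int l) * (2 * of_real pi * \<i> / of_nat m) = of_int (int k) * (2 * of_real pi * \<i> / of_nat m) + of_int (- int l) * (2 * of_real pi * \<i> / (of_nat m :: complex))"
      unfolding of_int_diff of_int_minus by (simp only: ring_distribs diff_conv_add_uminus mult_minus_left)
    then show ?thesis using \<open>om m ^ k * ze m ^ l = 1\<close> unfolding om_pow ze_pow exp_add[symmetric] by simp
  qed
  from root_dvd[OF assms(1) this] have "int m dvd int k - int l" .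
  then show False using assms
  proof (cases "k < l")
    case True
    have "int m dvd int l - int k" using \<open>int m dvd int k - int l\<close> by (metis dvd_minus_iff minus_diff_eq)
    moreover have "0 < int l - int k" "int l - int k < int m" using True assms by auto
    ultimately show False using zdvd_not_zless by blast
  next
    case False
    then have "0 < int k - int l" "int k - int l < int m" using assms by auto
    then show False using zdvd_not_zless \<open>int m dvd int k - int l\<close> by blast
  qed
qed
lemma ze_pow_ne: assumes "m > 0" "0 < j" "j < m" shows "ze m ^ j \<noteq> 1"
  using om_ze_ne[OF assms(1) _ assms(3), of 0] assms by simp


context
  fixes \<sigma> :: "'n::finite \<Rightarrow> 'n" and m :: nat
  assumes perm: "\<sigma> permutes UNIV" and mpos: "0 < m" and mid: "\<sigma> ^^ m = id"
begin

definition Eproj :: "nat \<Rightarrow> complex^'n^'n" where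
  "Eproj k = smult (1 / of_nat m) (\<Sum>j<m. smult (ze m ^ (j*k)) (perm_mat (\<sigma> ^^ j)))"

lemma P_Q: "perm_mat \<sigma> ** perm_mat (\<sigma>^^j) = perm_mat (\<sigma>^^Suc j)"
  by (simp add: perm_mat_mult)
lemma Q_P: "perm_mat (\<sigma>^^j) ** perm_mat \<sigma> = perm_mat (\<sigma>^^Suc j)"
  by (simp add: perm_mat_mult funpow_Suc_right del: funpow.simps)

lemma P_E: "perm_mat \<sigma> ** Eproj k = smult (om m ^ k) (Eproj k)"
proof -
  have "perm_mat \<sigma> ** Eproj k = smult (1/m) (\<Sum>j<m. smult (ze m ^ (j*k)) (perm_mat (\<sigma>^^Suc j)))"
    by (simp add: Eproj_def smult_mult_right sum_mult_right P_Q del: funpow.simps)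
  also have "(\<Sum>j<m. smult (ze m ^ (j*k)) (perm_mat (\<sigma>^^Suc j))) = (\<Sum>j<m. (\<lambda>j. smult (om m ^ k * ze m ^ (j*k)) (perm_mat (\<sigma>^^j))) (Suc j))"
  proof (rule sum.cong[OF refl])
    fix j
    have "om m ^ k * ze m ^ (Suc j * k) = (om m * ze m) ^ k * ze m ^ (j*k)"
      by (simp add: power_add power_mult_distrib)
    then have "om m ^ k * ze m ^ (Suc j * k) = ze m ^ (j*k)" by (simp add: om_ze)
    then show "smult (ze m ^ (j*k)) (perm_mat (\<sigma>^^Suc j)) = (\<lambda>j. smult (om m ^ k * ze m ^ (j*k)) (perm_mat (\<sigma>^^j))) (Suc j)"
      by (simp del: funpow.simps mult_Suc)
  qed
  also have "\<dots> = (\<Sum>j<m. smult (om m ^ k * ze m ^ (j*k)) (perm_mat (\<sigma>^^j)))"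
  proof (rule sum_shift)
    have "ze m ^ (m*k) = 1" by (simp add: power_mult ze_m[OF mpos])
    then show "smult (om m ^ k * ze m ^ (m * k)) (perm_mat (\<sigma> ^^ m)) = smult (om m ^ k * ze m ^ (0 * k)) (perm_mat (\<sigma> ^^ 0))"
      by (simp add: mid)
  qed
  finally show ?thesis by (simp add: Eproj_def smult_smult smult_sum mult.commute)
qed

lemma E_P: "Eproj k ** perm_mat \<sigma> = perm_mat \<sigma> ** Eproj k"
  by (simp add: Eproj_def smult_mult_right smult_mult_left sum_mult_right sum_mult_left P_Q Q_P del: funpow.simps)

lemma sum_E: "(\<Sum>k<m. Eproj k) = mat 1"
proof -
  have "(\<Sum>k<m. Eproj k) = smult (1/m) (\<Sum>k<m. \<Sum>j<m. smult (ze m ^ (j*k)) (perm_mat (\<sigma> ^^ j)))"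
    by (simp add: Eproj_def smult_sum)
  also have "\<dots> = smult (1/m) (\<Sum>j<m. smult (\<Sum>k<m. (ze m ^ j) ^ k) (perm_mat (\<sigma> ^^ j)))"
    by (simp add: sum.swap[of _ "{..<m}"] sum_smult power_mult)
  also have "(\<Sum>j<m. smult (\<Sum>k<m. (ze m ^ j) ^ k) (perm_mat (\<sigma> ^^ j))) = smult (\<Sum>k<m. (ze m ^ 0) ^ k) (perm_mat (\<sigma> ^^ 0))"
  proof (rule sum_single)
    fix l assume l: "l \<in> {..<m}" "l \<noteq> 0"
    have ne: "ze m ^ l \<noteq> 1" using ze_pow_ne[OF mpos, of l] l by auto
    have "(ze m ^ l) ^ m = 1" by (simp add: power_mult[symmetric] mult.commute[of l] power_mult ze_m[OF mpos])
    then have "(\<Sum>k<m. (ze m ^ l) ^ k) = 0" using ne by (simp add: sum_gp_strict)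
    then show "smult (\<Sum>k<m. (ze m ^ l) ^ k) (perm_mat (\<sigma> ^^ l)) = 0" by simp
  qed (use mpos in auto)
  finally show ?thesis using mpos by (simp add: smult_smult perm_mat_id)
qed

lemma E_orth1: assumes "k<m" "l<m" "k\<noteq>l" shows "Eproj k ** ctrans (Eproj l) = 0"
proof -
  have "Eproj k ** ctrans (Eproj l) = Eproj k ** (perm_mat \<sigma> ** ctrans (perm_mat \<sigma>)) ** ctrans (Eproj l)"
    using perm_mat_unitary(1)[OF perm] by simp
  also have "\<dots> = (Eproj k ** perm_mat \<sigma>) ** ctrans (Eproj l ** perm_mat \<sigma>)"
    by (simp add: ctrans_mult matrix_mul_assoc)
  also have "\<dots> = smult (om m ^ k * ze m ^ l) (Eproj k ** ctrans (Eproj l))"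
    by (simp add: E_P P_E ctrans_smult smult_mult_left smult_mult_right smult_smult cnj_om mult_ac)
  finally show ?thesis by (rule smult_fix[OF sym]) (rule om_ze_ne[OF mpos assms])
qed

lemma E_orth2: assumes "k<m" "l<m" "k\<noteq>l" shows "ctrans (Eproj k) ** Eproj l = 0"
proof -
  have "ctrans (Eproj k) ** Eproj l = ctrans (Eproj k) ** (ctrans (perm_mat \<sigma>) ** perm_mat \<sigma>) ** Eproj l"
    using perm_mat_unitary(2)[OF perm] by simp
  also have "\<dots> = ctrans (perm_mat \<sigma> ** Eproj k) ** (perm_mat \<sigma> ** Eproj l)"
    by (simp add: ctrans_mult matrix_mul_assoc)
  also have "\<dots> = smult (om m ^ l * ze m ^ k) (ctrans (Eproj k) ** Eproj l)"
    by (simp add: P_E ctrans_smult smult_mult_left smult_mult_right smult_smult cnj_om mult.commute)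
  finally show ?thesis by (rule smult_fix[OF sym]) (rule om_ze_ne[OF mpos assms(2,1)], use assms in auto)
qed

lemma E_self1: assumes "k<m" shows "Eproj k ** ctrans (Eproj k) = Eproj k"
proof -
  have "Eproj k = Eproj k ** ctrans (\<Sum>l<m. Eproj l)" by (simp add: sum_E)
  also have "\<dots> = (\<Sum>l<m. Eproj k ** ctrans (Eproj l))" by (simp add: ctrans_sum sum_mult_right)
  also have "\<dots> = Eproj k ** ctrans (Eproj k)" by (rule sum_single) (use assms E_orth1 in auto)
  finally show ?thesis ..
qed

lemma E_self2: assumes "k<m" shows "ctrans (Eproj k) ** Eproj k = Eproj k"
proof -
  have "Eproj k = ctrans (\<Sum>l<m. Eproj l) ** Eproj k" by (simp add: sum_E)
  also have "\<dots> = (\<Sum>l<m. ctrans (Eproj l) ** Eproj k)" by (simp add: ctrans_sum sum_mult_left)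
  also have "\<dots> = ctrans (Eproj k) ** Eproj k" by (rule sum_single) (use assms E_orth2 in auto)
  finally show ?thesis ..
qed

definition W :: "real \<Rightarrow> complex^'n^'n" where
  "W t = (\<Sum>k<m. smult (exp (of_real (t * (2*pi*k/m)) * \<i>)) (Eproj k))"

lemma exp_cnj_one: "exp (of_real a * \<i>) * cnj (exp (of_real a * \<i>)) = 1"
  by (simp add: exp_cnj exp_minus)
lemma exp_cnj_one': "cnj (exp (of_real a * \<i>)) * exp (of_real a * \<i>) = 1"
  by (simp add: exp_cnj exp_minus)

lemma W_unitary: "unitary_mat (W t)"
proof -
  let ?c = "\<lambda>k::nat. exp (of_real (t * (2*pi*k/m)) * \<i>)"
  have "W t ** ctrans (W t) = (\<Sum>k<m. smult (?c k) (Eproj k) ** ctrans (W t))"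
    by (simp only: W_def sum_mult_left)
  also have "\<dots> = (\<Sum>k<m. \<Sum>l<m. smult (?c k * cnj (?c l)) (Eproj k ** ctrans (Eproj l)))"
    by (rule sum.cong[OF refl]) (simp only: W_def ctrans_sum ctrans_smult sum_mult_right smult_mult_left smult_mult_right smult_smult smult_sum mult_ac)
  also have "\<dots> = (\<Sum>k<m. smult (?c k * cnj (?c k)) (Eproj k ** ctrans (Eproj k)))"
    by (rule sum.cong[OF refl], rule sum_single) (auto simp: E_orth1)
  also have "\<dots> = (\<Sum>k<m. Eproj k)"
    by (rule sum.cong[OF refl]) (simp only: exp_cnj_one smult_one, simp add: E_self1)
  also have "\<dots> = mat 1" by (rule sum_E)
  finally have 1: "W t ** ctrans (W t) = mat 1" .
  have "ctrans (W t) ** W t = (\<Sum>k<m. ctrans (smult (?c k) (Eproj k)) ** W t)"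
    by (simp only: W_def ctrans_sum sum_mult_left)
  also have "\<dots> = (\<Sum>k<m. \<Sum>l<m. smult (cnj (?c k) * ?c l) (ctrans (Eproj k) ** Eproj l))"
    by (rule sum.cong[OF refl]) (simp only: W_def ctrans_smult sum_mult_right smult_mult_left smult_mult_right smult_smult smult_sum mult_ac)
  also have "\<dots> = (\<Sum>k<m. smult (cnj (?c k) * ?c k) (ctrans (Eproj k) ** Eproj k))"
    by (rule sum.cong[OF refl], rule sum_single) (auto simp: E_orth2)
  also have "\<dots> = (\<Sum>k<m. Eproj k)"
    by (rule sum.cong[OF refl]) (simp only: exp_cnj_one' smult_one, simp add: E_self2)
  also have "\<dots> = mat 1" by (rule sum_E)
  finally show ?thesis using 1 by (simp add: unitary_mat_def)
qed

lemma W0: "W 0 = mat 1" by (simp add: W_def sum_E)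

lemma W1: "W 1 = perm_mat \<sigma>"
proof -
  have "exp (of_real (1 * (2*pi*k/m)) * \<i>) = om m ^ k" for k :: nat
    unfolding om_pow by (rule arg_cong[where f=exp]) simp
  then have "W 1 = (\<Sum>k<m. perm_mat \<sigma> ** Eproj k)" by (simp only: W_def P_E)
  also have "\<dots> = perm_mat \<sigma>" by (simp add: sum_mult_right[symmetric] sum_E)
  finally show ?thesis .
qed

lemma W_comm: assumes "\<And>c. d (\<sigma> c) = d c" shows "W t ** diag_mat d = diag_mat d ** W t"
proof -
  have "d ((\<sigma>^^j) c) = d c" for j c by (induction j) (simp_all add: assms)
  then have Q: "diag_mat d ** perm_mat (\<sigma>^^j) = perm_mat (\<sigma>^^j) ** diag_mat d" for j
    by (rule diag_perm_comm)
  have E: "Eproj k ** diag_mat d = diag_mat d ** Eproj k" for k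
    by (simp add: Eproj_def smult_mult_right smult_mult_left sum_mult_right sum_mult_left Q matrix_mul_assoc)
  show ?thesis
    by (simp add: W_def smult_mult_right smult_mult_left sum_mult_right sum_mult_left E)
qed

lemma W_cont: "continuous_on S f \<Longrightarrow> continuous_on S (\<lambda>x. W (f x))"
  unfolding W_def by (intro continuous_on_sum continuous_smult continuous_intros)

end

theorem lemma2p5:
  fixes \<sigma> :: "'n::finite \<Rightarrow> 'n"
    and A B :: "'a::metric_space set"
    and lam :: "'n \<Rightarrow> 'a \<Rightarrow> complex"
  assumes "\<sigma> permutes (UNIV :: 'n set)"
    and "closed A" and "closed B" and "A \<inter> B = {}" and "A \<noteq> {}" and "B \<noteq> {}"
    and "\<And>i. continuous_on UNIV (lam i)"
  shows "\<exists>v :: 'a \<Rightarrow> complex ^ 'n ^ 'n.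
           continuous_on UNIV v \<and> (\<forall>x. unitary_mat (v x)) \<and>
           (\<forall>x\<in>A. v x = mat 1) \<and>
           (\<forall>x\<in>B. v x = perm_mat \<sigma>) \<and>
           (\<forall>x. (\<forall>i. lam i x = lam (\<sigma> i) x) \<longrightarrow>
                 v x ** diag_mat (\<lambda>i. lam i x) = diag_mat (\<lambda>i. lam i x) ** v x)"
proof -
  have "permutation \<sigma>" using assms(1) by (auto simp: permutation_permutes)
  then obtain m where mid: "\<sigma> ^^ m = id" and mpos: "0 < m" by (rule permutation_is_nilpotent)
  define f where "f x = infdist x A / (infdist x A + infdist x B)" for x
  have den: "infdist x A + infdist x B \<noteq> 0" for x
  proof
    assume "infdist x A + infdist x B = 0"
    then have "infdist x A = 0" "infdist x B = 0" using infdist_nonneg[of x A] infdist_nonneg[of x B] by auto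
    then have "x \<in> A" "x \<in> B" using in_closed_iff_infdist_zero[OF assms(2,5)] in_closed_iff_infdist_zero[OF assms(3,6)] by blast+
    then show False using assms(4) by auto
  qed
  have fc: "continuous_on UNIV f"
    unfolding f_def by (intro continuous_intros) (use den in auto)
  have fA: "f x = 0" if "x \<in> A" for x
    using that in_closed_iff_infdist_zero[OF assms(2,5)] by (simp add: f_def)
  have fB: "f x = 1" if "x \<in> B" for x
  proof -
    have "infdist x B = 0" using that in_closed_iff_infdist_zero[OF assms(3,6)] by simp
    moreover have "infdist x A \<noteq> 0" using that assms(4) in_closed_iff_infdist_zero[OF assms(2,5)] by auto
    ultimately show ?thesis by (simp add: f_def)
  qed
  show ?thesis
  proof (intro exI[of _ "\<lambda>x. W \<sigma> m (f x)"] conjI allI ballI impI)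
    show "continuous_on UNIV (\<lambda>x. W \<sigma> m (f x))" by (rule W_cont[OF assms(1) mpos mid fc])
    show "unitary_mat (W \<sigma> m (f x))" for x by (rule W_unitary[OF assms(1) mpos mid])
    show "W \<sigma> m (f x) = mat 1" if "x \<in> A" for x using W0[OF assms(1) mpos mid] fA[OF that] by simp
    show "W \<sigma> m (f x) = perm_mat \<sigma>" if "x \<in> B" for x using W1[OF assms(1) mpos mid] fB[OF that] by simp
    show "W \<sigma> m (f x) ** diag_mat (\<lambda>i. lam i x) = diag_mat (\<lambda>i. lam i x) ** W \<sigma> m (f x)"
      if "\<forall>i. lam i x = lam (\<sigma> i) x" for x
      by (rule W_comm[OF assms(1) mpos mid]) (use that in \<open>metis\<close>)
  qed
qed

end
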